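(* Let $r\ge 1$ and let $\Gamma$ be a $(d-1)$-dimensional simplicial complex. (1) If $\mathrm{gr}_1(\Gamma)>2r$, then for any two vertices $u,v$ there are at most $(d-1)^{r-1}$ non-returning walks of length $r$ from $u$ to $v$. (2) If $\mathrm{gr}_1(\Gamma)>2r+1$ and $\{u,v\}$ is an edge, then any non-returning walk of length $r+1$ whose first step is $(u,v)$ and any non-returning walk of length $r+1$ whose first step is $(v,u)$ have different final vertices.
   Context: A simplicial complex $\Gamma$ on a finite vertex set $V=V(\Gamma)$ is a family of subsets of $V$ (faces) closed under taking subsets; its dimension is $\max\{|F|:F\in\Gamma\}-1$. A non-returning walk of length $k$ from $v_0$ to $v_k$ is a sequence of vertices $(v_0,v_1,\dots,v_k)$ (viewed as the sequence of directed edges $\vec{v_0v_1},\dots,\vec{v_{k-1}v_k}$) such that each $\{v_j,v_{j+1}\}$ is an edge of $\Gamma$ and, for all $0\le j\le k-2$, $v_j\neq v_{j+2}$ and $\{v_j,v_{j+1},v_{j+2}\}\notin\Gamma$; its first step is $(v_0,v_1)$. For $W\subseteq V$, $\Gamma[W]=\{F\in\Gamma:F\subseteq W\}$; for a face $F$ (possibly empty), $\mathrm{lk}_\Gamma(F)=\{G\setminus F: F\subseteq G\in\Gamma\}$. Fix a field $\mathbf{k}$; $\tilde H_i(\cdot;\mathbf{k})$ is reduced simplicial homology. The $1$-girth is $\mathrm{gr}_{1}(\Gamma)=\min\{|W|: W\subseteq V(\Gamma),\ \tilde H_{1}(\mathrm{lk}_\Gamma(F)[W];\mathbf{k})\neq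 0 \text{ for some face } F\in\Gamma \text{ (including } F=\emptyset)\}$, or $\infty$ if none exists. *)

theory Defs
  imports Main "HOL-Library.Extended_Nat"
begin

definition simplicial_complex :: "'a set set \<Rightarrow> bool" where
  "simplicial_complex \<Gamma> \<longleftrightarrow> finite \<Gamma> \<and> (\<forall>F\<in>\<Gamma>. finite F) \<and> {} \<in> \<Gamma> \<and>
     (\<forall>F\<in>\<Gamma>. \<forall>G. G \<subseteq> F \<longrightarrow> G \<in> \<Gamma>)"

definition vertices :: "'a set set \<Rightarrow> 'a set" where
  "vertices \<Gamma> = \<Union>\<Gamma>"

definition sc_dim :: "'a set set \<Rightarrow> int" where
  "sc_dim \<Gamma> = int (Max (card ` \<Gamma>)) - 1"

definition induced :: "'a set set \<Rightarrow> 'a set \<Rightarrow> 'a set set" where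
  "induced \<Gamma> W = {F \<in> \<Gamma>. F \<subseteq> W}"

definition link :: "'a set set \<Rightarrow> 'a set \<Rightarrow> 'a set set" where
  "link \<Gamma> F = {G - F | G. G \<in> \<Gamma> \<and> F \<subseteq> G}"

text \<open>Simplicial chains with coefficients in a field 'k, edges and triangles oriented
by the linear order on vertices: [a,b] with a<b, [a,b,c] with a<b<c.\<close>

definition boundary1 :: "'a::linorder set set \<Rightarrow> ('a set \<Rightarrow> 'k::field) \<Rightarrow> 'a \<Rightarrow> 'k" where
  "boundary1 \<Delta> c v = (\<Sum>E\<in>{E\<in>\<Delta>. card E = 2 \<and> v \<in> E}.
        (if v = Max E then 1 else -1) * c E)"

definition boundary2 :: "'a::linorder set set \<Rightarrow> ('a set \<Rightarrow> 'k::field) \<Rightarrow> 'a set \<Rightarrow> 'k" where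
  "boundary2 \<Delta> t E = (\<Sum>T\<in>{T\<in>\<Delta>. card T = 3 \<and> E \<subseteq> T}.
        (-1) ^ card {y\<in>T. y < (THE x. x \<in> T - E)} * t T)"

definition is_1cycle :: "'a::linorder set set \<Rightarrow> ('a set \<Rightarrow> 'k::field) \<Rightarrow> bool" where
  "is_1cycle \<Delta> c \<longleftrightarrow> (\<forall>E. c E \<noteq> 0 \<longrightarrow> E \<in> \<Delta> \<and> card E = 2) \<and> (\<forall>v. boundary1 \<Delta> c v = 0)"

definition is_1boundary :: "'a::linorder set set \<Rightarrow> ('a set \<Rightarrow> 'k::field) \<Rightarrow> bool" where
  "is_1boundary \<Delta> c \<longleftrightarrow> (\<exists>t. (\<forall>T. t T \<noteq> 0 \<longrightarrow> T \<in> \<Delta> \<and> card T = 3) \<and>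
       (\<forall>E. E \<in> \<Delta> \<and> card E = 2 \<longrightarrow> boundary2 \<Delta> t E = c E))"

text \<open>\<open>H1_nonzero TYPE('k) \<Delta>\<close>: reduced first homology of \<Delta> with coefficients in
the field 'k is nonzero, i.e. some 1-cycle is not a 1-boundary (ker/im \<noteq> 0).\<close>
definition H1_nonzero :: "'k::field itself \<Rightarrow> 'a::linorder set set \<Rightarrow> bool" where
  "H1_nonzero _ \<Delta> \<longleftrightarrow> (\<exists>c :: 'a set \<Rightarrow> 'k. is_1cycle \<Delta> c \<and> \<not> is_1boundary \<Delta> c)"

definition girth1 :: "'k::field itself \<Rightarrow> 'a::linorder set set \<Rightarrow> enat" where
  "girth1 K \<Gamma> = (INF W \<in> {W. W \<subseteq> vertices \<Gamma> \<and>
       (\<exists>F\<in>\<Gamma>. H1_nonzero K (induced (link \<Gamma> F) W))}. enat (card W))"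

definition is_edge :: "'a set set \<Rightarrow> 'a \<Rightarrow> 'a \<Rightarrow> bool" where
  "is_edge \<Gamma> x y \<longleftrightarrow> x \<noteq> y \<and> {x, y} \<in> \<Gamma>"

definition nr_walk :: "'a set set \<Rightarrow> nat \<Rightarrow> 'a list \<Rightarrow> bool" where
  "nr_walk \<Gamma> k vs \<longleftrightarrow> length vs = k + 1 \<and>
     (\<forall>j<k. is_edge \<Gamma> (vs ! j) (vs ! (j+1))) \<and>
     (\<forall>j. j + 2 \<le> k \<longrightarrow> vs ! j \<noteq> vs ! (j+2) \<and> {vs ! j, vs ! (j+1), vs ! (j+2)} \<notin> \<Gamma>)"

end

theory Submission
  imports Defs
begin


definition nrw :: "'a set set \<Rightarrow> nat \<Rightarrow> (nat \<Rightarrow> 'a) \<Rightarrow> bool" where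
  "nrw \<Gamma> k f \<longleftrightarrow> (\<forall>j<k. is_edge \<Gamma> (f j) (f (j+1))) \<and>
     (\<forall>j. j + 2 \<le> k \<longrightarrow> f j \<noteq> f (j+2) \<and> {f j, f (j+1), f (j+2)} \<notin> \<Gamma>)"

lemma nr_walk_nrw: "nr_walk \<Gamma> k vs \<longleftrightarrow> length vs = k + 1 \<and> nrw \<Gamma> k (\<lambda>j. vs ! j)"
  unfolding nr_walk_def nrw_def by auto

lemma is_edge_sym: "is_edge \<Gamma> x y \<Longrightarrow> is_edge \<Gamma> y x"
  unfolding is_edge_def by (auto simp: insert_commute)

lemma nrwE:
  assumes "nrw \<Gamma> k f"
  shows "\<And>j. j < k \<Longrightarrow> is_edge \<Gamma> (f j) (f (j+1))"
    and "\<And>j. j + 2 \<le> k \<Longrightarrow> f j \<noteq> f (j+2)"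
    and "\<And>j. j + 2 \<le> k \<Longrightarrow> {f j, f (j+1), f (j+2)} \<notin> \<Gamma>"
  using assms unfolding nrw_def by auto

lemma nrwI:
  assumes "\<And>j. j < k \<Longrightarrow> is_edge \<Gamma> (f j) (f (j+1))"
    and "\<And>j. j + 2 \<le> k \<Longrightarrow> f j \<noteq> f (j+2) \<and> {f j, f (j+1), f (j+2)} \<notin> \<Gamma>"
  shows "nrw \<Gamma> k f"
  using assms unfolding nrw_def by auto

lemma nrw_prefix: "nrw \<Gamma> k f \<Longrightarrow> m \<le> k \<Longrightarrow> nrw \<Gamma> m f"
  unfolding nrw_def by auto

lemma nrw_shift: assumes "nrw \<Gamma> k f" "m \<le> k" shows "nrw \<Gamma> (k - m) (\<lambda>j. f (j + m))"
proof (rule nrwI)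
  fix j
  { assume "j < k - m"
    then show "is_edge \<Gamma> (f (j + m)) (f (j + 1 + m))" using nrwE(1)[OF assms(1), of "j+m"] by (simp add: algebra_simps) }
  { assume "j + 2 \<le> k - m"
    then show "f (j + m) \<noteq> f (j + 2 + m) \<and> {f (j + m), f (j + 1 + m), f (j + 2 + m)} \<notin> \<Gamma>"
      using nrwE(2,3)[OF assms(1), of "j+m"] by (simp add: algebra_simps) }
qed

lemma nrw_rev: assumes "nrw \<Gamma> k f" shows "nrw \<Gamma> k (\<lambda>j. f (k - j))"
proof (rule nrwI)
  fix j
  { assume j: "j < k"
    have "is_edge \<Gamma> (f (k - j - 1)) (f (k - j - 1 + 1))" using nrwE(1)[OF assms] j by auto
    moreover have "k - j - 1 + 1 = k - j" "k - (j+1) = k - j - 1" using j by auto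
    ultimately show "is_edge \<Gamma> (f (k - j)) (f (k - (j + 1)))" using is_edge_sym by metis }
  { assume j: "j + 2 \<le> k"
    have "f (k-j-2) \<noteq> f (k-j-2 + 2) \<and> {f (k-j-2), f (k-j-2 + 1), f (k-j-2 + 2)} \<notin> \<Gamma>"
      using nrwE(2,3)[OF assms, of "k-j-2"] j by auto
    moreover have "k-j-2+2 = k - j" "k-j-2+1 = k - (j+1)" "k - (j+2) = k-j-2" using j by auto
    ultimately show "f (k - j) \<noteq> f (k - (j + 2)) \<and> {f (k - j), f (k - (j + 1)), f (k - (j + 2))} \<notin> \<Gamma>"
      by (auto simp: insert_commute) }
qed

lemma nrw_glue:
  assumes f: "nrw \<Gamma> a f" and k: "nrw \<Gamma> b g" and m: "f a = g 0"
    and J: "1 \<le> a \<Longrightarrow> 1 \<le> b \<Longrightarrow> f (a-1) \<noteq> g 1 \<and> {f (a-1), f a, g 1} \<notin> \<Gamma>"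
  shows "nrw \<Gamma> (a+b) (\<lambda>j. if j \<le> a then f j else g (j - a))"
proof (rule nrwI)
  fix j
  { assume j: "j < a + b"
    show "is_edge \<Gamma> (if j \<le> a then f j else g (j - a)) (if j + 1 \<le> a then f (j + 1) else g (j + 1 - a))"
    proof (cases "j < a")
      case True then show ?thesis using nrwE(1)[OF f] by auto
    next
      case False
      then have "(if j \<le> a then f j else g (j - a)) = g (j - a)" using m by auto
      moreover have "j + 1 - a = j - a + 1" using False by auto
      moreover have "j - a < b" using j False by auto
      ultimately show ?thesis using nrwE(1)[OF k] False by auto
    qed }
  { assume j: "j + 2 \<le> a + b"
    show "(if j \<le> a then f j else g (j - a)) \<noteq> (if j + 2 \<le> a then f (j + 2) else g (j + 2 - a)) \<and>
          {if j \<le> a then f j else g (j - a), if j + 1 \<le> a then f (j + 1) else g (j + 1 - a),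
           if j + 2 \<le> a then f (j + 2) else g (j + 2 - a)} \<notin> \<Gamma>"
    proof (cases "j + 2 \<le> a")
      case True then show ?thesis using nrwE(2,3)[OF f] by auto
    next
      case False
      show ?thesis
      proof (cases "j + 1 = a")
        case True
        then have "j = a - 1" "j + 2 - a = 1" "1 \<le> a" "1 \<le> b" using j by auto
        then show ?thesis using J True by auto
      next
        case False2: False
        then have ja: "a \<le> j" using False by auto
        have e: "(if j \<le> a then f j else g (j - a)) = g (j - a)" using m ja by auto
        have "j + 1 - a = j - a + 1" "j + 2 - a = j - a + 2" "j - a + 2 \<le> b" using ja j by auto
        then show ?thesis using nrwE(2,3)[OF k, of "j-a"] ja e by auto
      qed
    qed }
qed



lemma girth_le:
  assumes "F \<in> \<Gamma>" "W \<subseteq> vertices \<Gamma>" "H1_nonzero K (induced (link \<Gamma> F) W)"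
  shows "girth1 K \<Gamma> \<le> enat (card W)"
  unfolding girth1_def by (rule INF_lower) (use assms in auto)

lemma link_empty: "link \<Gamma> {} = \<Gamma>"
  unfolding link_def by auto

lemma cyc_H1:
  fixes \<Delta> :: "'a::linorder set set" and g :: "nat \<Rightarrow> 'a" and K :: "'k::field itself"
  assumes fin: "finite \<Delta>" and n1: "1 \<le> n" and cl: "g n = g 0"
    and ed: "\<And>i. i < n \<Longrightarrow> g i \<noteq> g (Suc i) \<and> {g i, g (Suc i)} \<in> \<Delta>"
    and no3: "\<And>T. T \<in> \<Delta> \<Longrightarrow> card T \<noteq> 3"
    and un: "\<And>i. 0 < i \<Longrightarrow> i < n \<Longrightarrow> {g i, g (Suc i)} \<noteq> {g 0, g 1}"
  shows "H1_nonzero K \<Delta>"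
proof -
  define e where "e i = {g i, g (Suc i)}" for i
  define tau :: "nat \<Rightarrow> 'k" where "tau i = (if g (Suc i) = Max (e i) then 1 else -1)" for i
  define c :: "'a set \<Rightarrow> 'k" where "c E = (\<Sum>i<n. if E = e i then tau i else 0)" for E
  have cyc: "is_1cycle \<Delta> c"
    unfolding is_1cycle_def
  proof (rule conjI; intro allI impI)
    fix E assume "c E \<noteq> 0"
    then have "\<exists>i\<in>{..<n}. (if E = e i then tau i else 0) \<noteq> 0" unfolding c_def
      using sum.neutral[of "{..<n}" "\<lambda>i. if E = e i then tau i else 0"] by blast
    then obtain i where "i < n" "E = e i" by (auto split: if_splits)
    then show "E \<in> \<Delta> \<and> card E = 2" using ed[of i] unfolding e_def by auto
  next
    fix v
    define A where "A = {E \<in> \<Delta>. card E = 2 \<and> v \<in> E}"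
    define sg where "sg E = (if v = Max E then 1 else (-1::'k))" for E
    have finA: "finite A" using fin unfolding A_def by auto
    have eA: "i < n \<Longrightarrow> e i \<in> A \<longleftrightarrow> v \<in> e i" for i using ed[of i] unfolding A_def e_def by auto
    have "boundary1 \<Delta> c v = (\<Sum>E\<in>A. sg E * c E)" unfolding boundary1_def A_def sg_def by simp
    also have "\<dots> = (\<Sum>E\<in>A. \<Sum>i<n. (if E = e i then sg E * tau i else 0))"
      unfolding c_def sum_distrib_left by (intro sum.cong refl) simp
    also have "\<dots> = (\<Sum>i<n. \<Sum>E\<in>A. (if E = e i then sg E * tau i else 0))"
      by (rule sum.swap)
    also have "\<dots> = (\<Sum>i<n. if e i \<in> A then sg (e i) * tau i else 0)"
      by (intro sum.cong refl) (rule sum.delta[OF finA])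
    also have "\<dots> = (\<Sum>i<n. (if v = g (Suc i) then 1 else 0) - (if v = g i then 1 else 0))"
    proof (rule sum.cong[OF refl])
      fix i assume i: "i \<in> {..<n}"
      have ne: "g i \<noteq> g (Suc i)" using ed[of i] i by auto
      have M: "Max (e i) = max (g i) (g (Suc i))" unfolding e_def by simp
      show "(if e i \<in> A then sg (e i) * tau i else 0) =
            (if v = g (Suc i) then 1 else 0) - (if v = g i then 1 else 0)"
      proof (cases "v = g (Suc i)")
        case True
        then have "e i \<in> A" using eA[of i] i unfolding e_def by auto
        moreover have "sg (e i) = tau i" unfolding sg_def tau_def using True by simp
        moreover have "tau i * tau i = 1" unfolding tau_def by simp
        ultimately show ?thesis using True ne by simp
      next
        case False
        show ?thesis
        proof (cases "v = g i")
          case True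
          then have "e i \<in> A" using eA[of i] i unfolding e_def by auto
          moreover have "sg (e i) * tau i = -1"
            unfolding sg_def tau_def M using True ne by (cases "g i < g (Suc i)") (auto simp: max_def)
          ultimately show ?thesis using True False by simp
        next
          case False2: False
          then have "e i \<notin> A" using eA[of i] i False unfolding e_def by auto
          then show ?thesis using False False2 by simp
        qed
      qed
    qed
    also have "\<dots> = (if v = g n then 1 else 0) - (if v = g 0 then 1 else 0)"
      by (rule sum_lessThan_telescope[where f = "\<lambda>i. if v = g i then (1::'k) else 0"])
    also have "\<dots> = 0" using cl by simp
    finally show "boundary1 \<Delta> c v = 0" .
  qed
  have nb: "\<not> is_1boundary \<Delta> c"
  proof
    assume "is_1boundary \<Delta> c"
    then obtain t where t: "\<And>T. t T \<noteq> 0 \<Longrightarrow> T \<in> \<Delta> \<and> card T = 3"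
      and b: "\<And>E. E \<in> \<Delta> \<and> card E = 2 \<Longrightarrow> boundary2 \<Delta> t E = c E"
      unfolding is_1boundary_def by blast
    have t0: "t T = 0" for T using t[of T] no3[of T] by blast
    have e0: "e 0 \<in> \<Delta> \<and> card (e 0) = 2" using ed[of 0] n1 unfolding e_def by auto
    have "boundary2 \<Delta> t (e 0) = 0" unfolding boundary2_def by (simp add: t0)
    moreover have "c (e 0) = tau 0"
    proof -
      have "c (e 0) = (\<Sum>i<n. if i = 0 then tau i else 0)"
        unfolding c_def
      proof (rule sum.cong[OF refl])
        fix i assume "i \<in> {..<n}"
        then show "(if e 0 = e i then tau i else 0) = (if i = 0 then tau i else 0)"
          using un[of i] unfolding e_def by (cases "i = 0") auto
      qed
      also have "\<dots> = tau 0" using n1 by (simp add: sum.delta)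
      finally show ?thesis .
    qed
    moreover have "tau 0 \<noteq> 0" unfolding tau_def by simp
    ultimately show False using b[OF e0] by simp
  qed
  show ?thesis unfolding H1_nonzero_def using cyc nb by blast
qed



lemma sc_closed: "simplicial_complex \<Gamma> \<Longrightarrow> G \<in> \<Gamma> \<Longrightarrow> H \<subseteq> G \<Longrightarrow> H \<in> \<Gamma>"
  unfolding simplicial_complex_def by blast

lemma finite_induced_link: "simplicial_complex \<Gamma> \<Longrightarrow> finite (induced (link \<Gamma> F) W)"
proof -
  assume sc: "simplicial_complex \<Gamma>"
  have "link \<Gamma> F = (\<lambda>G. G - F) ` {G \<in> \<Gamma>. F \<subseteq> G}" unfolding link_def by auto
  then have "finite (link \<Gamma> F)" using sc unfolding simplicial_complex_def by auto
  then show ?thesis unfolding induced_def by auto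
qed

lemma triangle:
  fixes \<Gamma> :: "'a::linorder set set" and K :: "'k::field itself"
  assumes sc: "simplicial_complex \<Gamma>" and g3: "enat 3 < girth1 K \<Gamma>" and F: "F \<in> \<Gamma>"
    and d: "x \<noteq> y" "y \<noteq> z" "x \<noteq> z" and nF: "x \<notin> F" "y \<notin> F" "z \<notin> F"
    and e: "insert x (insert y F) \<in> \<Gamma>" "insert y (insert z F) \<in> \<Gamma>" "insert x (insert z F) \<in> \<Gamma>"
  shows "insert x (insert y (insert z F)) \<in> \<Gamma>"
proof (rule ccontr)
  assume N: "insert x (insert y (insert z F)) \<notin> \<Gamma>"
  define \<Delta> where "\<Delta> = induced (link \<Gamma> F) {x,y,z}"
  define g :: "nat \<Rightarrow> 'a" where "g i = (if i = 0 then x else if i = 1 then y else if i = 2 then z else x)" for i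
  have edge: "{a,b} \<in> \<Delta>" if "insert a (insert b F) \<in> \<Gamma>" "a \<notin> F" "b \<notin> F" "a \<in> {x,y,z}" "b \<in> {x,y,z}" for a b
  proof -
    have "{a,b} = insert a (insert b F) - F" using that by auto
    then have "{a,b} \<in> link \<Gamma> F" unfolding link_def using that by blast
    then show ?thesis unfolding \<Delta>_def induced_def using that by auto
  qed
  have no3: "card T \<noteq> 3" if T: "T \<in> \<Delta>" for T
  proof
    assume c3: "card T = 3"
    have sub: "T \<subseteq> {x,y,z}" using T unfolding \<Delta>_def induced_def by auto
    have "card {x,y,z} = 3" using d by auto
    then have TT: "T = {x,y,z}" using card_subset_eq[OF _ sub] c3 by auto
    obtain G where G: "G \<in> \<Gamma>" "F \<subseteq> G" "T = G - F" using T unfolding \<Delta>_def induced_def link_def by auto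
    then have "G = insert x (insert y (insert z F))" using TT by auto
    then show False using G N by simp
  qed
  have H: "H1_nonzero K \<Delta>"
  proof (rule cyc_H1[where n = 3 and g = g])
    show "finite \<Delta>" unfolding \<Delta>_def by (rule finite_induced_link[OF sc])
    show "g 3 = g 0" unfolding g_def by simp
    fix i :: nat
    assume "i < 3"
    then have "i = 0 \<or> i = 1 \<or> i = 2" by auto
    then show "g i \<noteq> g (Suc i) \<and> {g i, g (Suc i)} \<in> \<Delta>"
      using edge[OF e(1)] edge[OF e(2)] edge[OF e(3)] nF d unfolding g_def
      by (auto simp: insert_commute)
  next
    fix T assume "T \<in> \<Delta>" then show "card T \<noteq> 3" by (rule no3)
  next
    fix i :: nat assume "0 < i" "i < 3"
    then have "i = 1 \<or> i = 2" by auto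
    then show "{g i, g (Suc i)} \<noteq> {g 0, g 1}" using d unfolding g_def by (auto simp: doubleton_eq_iff)
  qed simp
  have W: "{x,y,z} \<subseteq> vertices \<Gamma>" unfolding vertices_def using e by blast
  have "girth1 K \<Gamma> \<le> enat (card {x,y,z})" unfolding \<Delta>_def by (rule girth_le[OF F W H[unfolded \<Delta>_def]])
  moreover have "card {x,y,z} = 3" using d by simp
  ultimately have "girth1 K \<Gamma> \<le> enat 3" by simp
  then show False using g3 leD by blast
qed

lemma flag:
  fixes \<Gamma> :: "'a::linorder set set" and K :: "'k::field itself"
  assumes sc: "simplicial_complex \<Gamma>" and g3: "enat 3 < girth1 K \<Gamma>" and fin: "finite S"
  shows "F \<in> \<Gamma> \<Longrightarrow> S \<inter> F = {} \<Longrightarrow> (\<forall>x\<in>S. insert x F \<in> \<Gamma>) \<Longrightarrow>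
         (\<forall>x\<in>S. \<forall>y\<in>S. x \<noteq> y \<longrightarrow> insert x (insert y F) \<in> \<Gamma>) \<Longrightarrow> S \<union> F \<in> \<Gamma>"
  using fin
proof (induction S arbitrary: F rule: finite_induct)
  case empty then show ?case by simp
next
  case (insert x S)
  have "S \<union> insert x F \<in> \<Gamma>"
  proof (rule insert.IH)
    show "insert x F \<in> \<Gamma>" using insert.prems by auto
    show "S \<inter> insert x F = {}" using insert.prems insert.hyps by auto
    show "\<forall>y\<in>S. insert y (insert x F) \<in> \<Gamma>" using insert.prems insert.hyps by auto
    show "\<forall>y\<in>S. \<forall>z\<in>S. y \<noteq> z \<longrightarrow> insert y (insert z (insert x F)) \<in> \<Gamma>"
    proof (intro ballI impI)
      fix y z assume yz: "y \<in> S" "z \<in> S" "y \<noteq> z"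
      have "insert x (insert y (insert z F)) \<in> \<Gamma>"
        using triangle[OF sc g3, of F x y z] insert.prems insert.hyps yz by auto
      then show "insert y (insert z (insert x F)) \<in> \<Gamma>" by (simp add: insert_commute)
    qed
  qed
  then show ?case by simp
qed



lemma noclosed:
  fixes \<Gamma> :: "'a::linorder set set" and K :: "'k::field itself"
  assumes sc: "simplicial_complex \<Gamma>"
  shows "nrw \<Gamma> n f \<Longrightarrow> 1 \<le> n \<Longrightarrow> enat n < girth1 K \<Gamma> \<Longrightarrow> f n = f 0 \<Longrightarrow> False"
proof (induction n arbitrary: f rule: less_induct)
  case (less n f)
  note nr = less.prems(1) and n1 = less.prems(2) and gn = less.prems(3) and cl = less.prems(4)
  have IH: "\<And>m h. m < n \<Longrightarrow> nrw \<Gamma> m h \<Longrightarrow> 1 \<le> m \<Longrightarrow> h m = h 0 \<Longrightarrow> False"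
  proof -
    fix m h assume "m < n" "nrw \<Gamma> m h" "1 \<le> m" "h m = h 0"
    moreover have "enat m < girth1 K \<Gamma>" using gn \<open>m < n\<close> by (meson enat_ord_simps(2) order_less_trans)
    ultimately show False using less.IH by blast
  qed
  have n3: "3 \<le> n"
  proof (rule ccontr)
    assume "\<not> 3 \<le> n"
    then have "n = 1 \<or> n = 2" using n1 by auto
    then show False
    proof
      assume "n = 1" then show False using nrwE(1)[OF nr, of 0] cl unfolding is_edge_def by auto
    next
      assume "n = 2" then show False using nrwE(2)[OF nr, of 0] cl by (auto simp: numeral_2_eq_2)
    qed
  qed
  show False
  proof (cases "\<exists>a b. a < b \<and> b \<le> n \<and> \<not>(a = 0 \<and> b = n) \<and> f a = f b")
    case True
    then obtain a b where ab: "a < b" "b \<le> n" "\<not>(a = 0 \<and> b = n)" "f a = f b" by blast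
    have w: "nrw \<Gamma> (b - a) (\<lambda>j. f (j + a))"
      using nrw_prefix[OF nrw_shift[OF nr, of a]] ab by auto
    show False
    proof (rule IH[OF _ w])
      show "b - a < n" using ab by auto
      show "1 \<le> b - a" using ab by auto
      show "f (b - a + a) = f (0 + a)" using ab by simp
    qed
  next
    case False
    then have simple: "\<And>a b. a < b \<Longrightarrow> b \<le> n \<Longrightarrow> \<not>(a = 0 \<and> b = n) \<Longrightarrow> f a \<noteq> f b" by blast
    show False
    proof (cases "\<exists>a b. a < b \<and> b < n \<and> a + 2 \<le> b \<and> \<not>(a = 0 \<and> b = n - 1) \<and> is_edge \<Gamma> (f a) (f b)")
      case True
      define P where "P p = (case p of (a,b) \<Rightarrow> a < b \<and> b < n \<and> a + 2 \<le> b \<and> \<not>(a = 0 \<and> b = n - 1) \<and> is_edge \<Gamma> (f a) (f b))" for p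
      define m where "m p = (case p of (a,b) \<Rightarrow> b - a)" for p :: "nat \<times> nat"
      obtain p0 where "P p0" using True unfolding P_def by auto
      then obtain p where Pp: "P p" and mp: "\<And>q. P q \<Longrightarrow> m p \<le> m q" using ex_has_least_nat[of P p0 m] by blast
      obtain a b where pab: "p = (a,b)" by (cases p)
      have ab: "a < b" "b < n" "a + 2 \<le> b" "\<not>(a = 0 \<and> b = n - 1)" "is_edge \<Gamma> (f a) (f b)"
        using Pp unfolding P_def pab by auto
      have minab: "\<And>a' b'. P (a',b') \<Longrightarrow> b - a \<le> b' - a'" using mp unfolding pab m_def by fastforce
      have w: "nrw \<Gamma> (b - a) (\<lambda>j. f (j + a))"
        using nrw_prefix[OF nrw_shift[OF nr, of a]] ab by auto
      define g1 where "g1 j = (if j = 0 then f b else f a)" for j :: nat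
      have w1: "nrw \<Gamma> 1 g1" unfolding nrw_def g1_def using is_edge_sym[OF ab(5)] by auto
      have bb: "b - a - 1 + a = b - 1" using ab by auto
      have "f a \<noteq> f (b - 1)" by (rule simple) (use ab in auto)
      then have nb1: "f (b - 1) \<noteq> f a" by simp
      have tri: "{f (b - 1), f b, f a} \<notin> \<Gamma>"
      proof
        assume T: "{f (b - 1), f b, f a} \<in> \<Gamma>"
        show False
        proof (cases "a + 2 = b")
          case True
          then have eq: "{f a, f (a + 1), f (a + 2)} = {f (b - 1), f b, f a}" by auto
          then have "{f a, f (a + 1), f (a + 2)} \<in> \<Gamma>" using T by simp
          then show False using nrwE(3)[OF nr, of a] True ab by auto
        next
          case False
          have "{f a, f (b - 1)} \<in> \<Gamma>" using sc_closed[OF sc T] by auto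
          then have "is_edge \<Gamma> (f a) (f (b - 1))" using nb1 unfolding is_edge_def by auto
          then have "P (a, b - 1)" unfolding P_def using ab False by auto
          then show False using minab[of a "b - 1"] ab by auto
        qed
      qed
      have G: "nrw \<Gamma> (b - a + 1) (\<lambda>j. if j \<le> b - a then f (j + a) else g1 (j - (b - a)))"
      proof (rule nrw_glue[OF w w1])
        show "f (b - a + a) = g1 0" using ab unfolding g1_def by simp
        show "f (b - a - 1 + a) \<noteq> g1 1 \<and> {f (b - a - 1 + a), f (b - a + a), g1 1} \<notin> \<Gamma>"
          using nb1 tri bb ab unfolding g1_def by simp
      qed
      show False
      proof (rule IH[OF _ G])
        show "b - a + 1 < n" using ab by auto
        show "1 \<le> b - a + 1" by simp
        show "(if b - a + 1 \<le> b - a then f (b - a + 1 + a) else g1 (b - a + 1 - (b - a))) =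
              (if 0 \<le> b - a then f (0 + a) else g1 (0 - (b - a)))" unfolding g1_def by simp
      qed
    next
      case False
      then have chordless: "\<And>a b. a < b \<Longrightarrow> b < n \<Longrightarrow> a + 2 \<le> b \<Longrightarrow> \<not>(a = 0 \<and> b = n - 1) \<Longrightarrow> \<not> is_edge \<Gamma> (f a) (f b)"
        by blast
      define W where "W = f ` {..<n}"
      define \<Delta> where "\<Delta> = induced (link \<Gamma> {}) W"
      have inj: "inj_on f {..<n}"
      proof (rule inj_onI)
        fix x y assume "x \<in> {..<n}" "y \<in> {..<n}" "f x = f y"
        then show "x = y" using simple[of x y] simple[of y x] by (cases x y rule: linorder_cases) auto
      qed
      have cW: "card W = n" unfolding W_def using card_image[OF inj] by simp
      have fnW: "f i \<in> W" if "i \<le> n" for i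
        using that cl n1 unfolding W_def by (cases "i = n") auto
      have adj: "p + 1 = q \<or> q + 1 = p \<or> (p = 0 \<and> q = n - 1) \<or> (q = 0 \<and> p = n - 1)"
        if "p < n" "q < n" "p \<noteq> q" "{f p, f q} \<in> \<Gamma>" for p q
      proof -
        have e: "is_edge \<Gamma> (f p) (f q)" using that simple[of p q] simple[of q p] unfolding is_edge_def
          by (cases p q rule: linorder_cases) auto
        show ?thesis
        proof (cases p q rule: linorder_cases)
          case less
          then show ?thesis using chordless[of p q] e that by fastforce
        next
          case greater
          then show ?thesis using chordless[of q p] is_edge_sym[OF e] that by fastforce
        qed (use that in auto)
      qed
      have H: "H1_nonzero K \<Delta>"
      proof (rule cyc_H1[where n = n and g = f])
        show "finite \<Delta>" unfolding \<Delta>_def by (rule finite_induced_link[OF sc])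
        show "1 \<le> n" by fact
        show "f n = f 0" by fact
      next
        fix i assume i: "i < n"
        have "is_edge \<Gamma> (f i) (f (Suc i))" using nrwE(1)[OF nr i] by simp
        then show "f i \<noteq> f (Suc i) \<and> {f i, f (Suc i)} \<in> \<Delta>"
          unfolding \<Delta>_def induced_def link_empty is_edge_def using fnW[of i] fnW[of "Suc i"] i by auto
      next
        fix T assume T: "T \<in> \<Delta>"
        show "card T \<noteq> 3"
        proof
          assume "card T = 3"
          then obtain x y z where xyz: "T = {x,y,z}" "x \<noteq> y" "y \<noteq> z" "x \<noteq> z" by (auto simp: card_3_iff)
          have TG: "T \<in> \<Gamma>" "T \<subseteq> W" using T unfolding \<Delta>_def induced_def link_empty by auto
          obtain p q s where pqs: "p < n" "q < n" "s < n" "x = f p" "y = f q" "z = f s"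
            using TG(2) xyz unfolding W_def by auto
          have d: "p \<noteq> q" "q \<noteq> s" "p \<noteq> s" using pqs xyz by auto
          have "{f p, f q} \<in> \<Gamma>" "{f q, f s} \<in> \<Gamma>" "{f p, f s} \<in> \<Gamma>"
            using sc_closed[OF sc TG(1)] xyz pqs by auto
          then have A1: "p + 1 = q \<or> q + 1 = p \<or> (p = 0 \<and> q = n - 1) \<or> (q = 0 \<and> p = n - 1)"
            and A2: "q + 1 = s \<or> s + 1 = q \<or> (q = 0 \<and> s = n - 1) \<or> (s = 0 \<and> q = n - 1)"
            and A3: "p + 1 = s \<or> s + 1 = p \<or> (p = 0 \<and> s = n - 1) \<or> (s = 0 \<and> p = n - 1)"
            using adj pqs d by auto
          have n3': "n = 3" using A1 A2 A3 d pqs n3 by arith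
          have S: "{p,q,s} = {0,1,2}" using n3' d pqs by auto
          have "T = f ` {p,q,s}" using xyz pqs by auto
          also have "\<dots> = {f 0, f 1, f 2}" using S by simp
          finally have "{f 0, f (0+1), f (0+2)} \<in> \<Gamma>" using TG by (simp add: numeral_2_eq_2)
          then show False using nrwE(3)[OF nr, of 0] n3 by simp
        qed
      next
        fix i assume i: "0 < i" "i < n"
        show "{f i, f (Suc i)} \<noteq> {f 0, f 1}"
        proof
          assume E: "{f i, f (Suc i)} = {f 0, f 1}"
          have "f i \<noteq> f 0" using simple[of 0 i] i by auto
          then have "f i = f 1" "f (Suc i) = f 0" using E by (auto simp: doubleton_eq_iff)
          moreover have "i = 1" using simple[of 1 i] simple[of i 1] i \<open>f i = f 1\<close>
            by (cases i "1::nat" rule: linorder_cases) auto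
          ultimately show False using simple[of 0 2] n3 by (auto simp: numeral_2_eq_2)
        qed
      qed
      have Wv: "W \<subseteq> vertices \<Gamma>"
      proof
        fix x assume "x \<in> W"
        then obtain i where i: "i < n" "x = f i" unfolding W_def by auto
        have "{f i, f (i+1)} \<in> \<Gamma>" using nrwE(1)[OF nr i(1)] unfolding is_edge_def by auto
        then show "x \<in> vertices \<Gamma>" unfolding vertices_def using i by blast
      qed
      have "girth1 K \<Gamma> \<le> enat (card W)"
        by (rule girth_le[OF _ Wv H[unfolded \<Delta>_def]]) (use sc in \<open>auto simp: simplicial_complex_def\<close>)
      then show False using gn cW leD by auto
    qed
  qed
qed



lemma nrw_cong: "(\<And>j. j \<le> k \<Longrightarrow> f j = g j) \<Longrightarrow> nrw \<Gamma> k f = nrw \<Gamma> k g"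
  unfolding nrw_def by auto

lemma sc_vertices_finite: "simplicial_complex \<Gamma> \<Longrightarrow> finite (vertices \<Gamma>)"
  unfolding simplicial_complex_def vertices_def by auto

lemma walk_vertices:
  assumes "nr_walk \<Gamma> k w" "1 \<le> k"
  shows "set w \<subseteq> vertices \<Gamma>"
proof
  fix x assume "x \<in> set w"
  then obtain i where i: "i < length w" "x = w ! i" by (auto simp: in_set_conv_nth)
  have L: "length w = k + 1" and N: "nrw \<Gamma> k (\<lambda>j. w ! j)" using assms(1) unfolding nr_walk_nrw by auto
  show "x \<in> vertices \<Gamma>"
  proof (cases "i < k")
    case True
    then have "{w ! i, w ! (i+1)} \<in> \<Gamma>" using nrwE(1)[OF N True] unfolding is_edge_def by auto
    then show ?thesis unfolding vertices_def using i by blast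
  next
    case False
    then have "i = k" using i L by auto
    have "{w ! (k-1), w ! (k-1+1)} \<in> \<Gamma>" using nrwE(1)[OF N, of "k-1"] assms(2) unfolding is_edge_def by auto
    then show ?thesis unfolding vertices_def using i \<open>i = k\<close> assms(2) by auto
  qed
qed

lemma walks_finite:
  assumes "simplicial_complex \<Gamma>" "1 \<le> k"
  shows "finite {w. nr_walk \<Gamma> k w \<and> P w}"
proof (rule finite_subset)
  show "{w. nr_walk \<Gamma> k w \<and> P w} \<subseteq> {w. set w \<subseteq> vertices \<Gamma> \<and> length w = k + 1}"
    using walk_vertices[OF _ assms(2)] unfolding nr_walk_nrw by auto
  show "finite {w. set w \<subseteq> vertices \<Gamma> \<and> length w = k + 1}"
    by (rule finite_lists_length_eq[OF sc_vertices_finite[OF assms(1)]])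
qed

lemma pair_face:
  fixes \<Gamma> :: "'a::linorder set set" and K :: "'k::field itself"
  assumes sc: "simplicial_complex \<Gamma>" and f: "nrw \<Gamma> a f" and h: "nrw \<Gamma> a h" and a1: "1 \<le> a"
    and e0: "f 0 = h 0" and ea: "f a = h a" and ne: "f (a-1) \<noteq> h (a-1)"
    and g: "enat (2*a) < girth1 K \<Gamma>"
  shows "{f (a-1), f a, h (a-1)} \<in> \<Gamma>"
proof (rule ccontr)
  assume N: "{f (a-1), f a, h (a-1)} \<notin> \<Gamma>"
  have k: "nrw \<Gamma> a (\<lambda>j. h (a - j))" by (rule nrw_rev[OF h])
  have G: "nrw \<Gamma> (a+a) (\<lambda>j. if j \<le> a then f j else h (a - (j - a)))"
  proof (rule nrw_glue[OF f k])
    show "f a = h (a - 0)" using ea by simp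
    show "f (a - 1) \<noteq> h (a - 1) \<and> {f (a - 1), f a, h (a - 1)} \<notin> \<Gamma>" using ne N by simp
  qed
  show False
  proof (rule noclosed[OF sc G])
    show "1 \<le> a + a" using a1 by simp
    show "enat (a + a) < girth1 K \<Gamma>" using g by (simp add: mult_2)
    show "(if a + a \<le> a then f (a + a) else h (a - (a + a - a))) = (if 0 \<le> a then f 0 else h (a - (0 - a)))"
      using a1 e0 by simp
  qed
qed

lemma count:
  fixes \<Gamma> :: "'a::linorder set set" and K :: "'k::field itself"
  assumes sc: "simplicial_complex \<Gamma>" and dM: "Max (card ` \<Gamma>) = d"
  shows "1 \<le> r \<Longrightarrow> \<forall>u v. enat (2*r) < girth1 K \<Gamma> \<longrightarrow>
           card {w. nr_walk \<Gamma> r w \<and> hd w = u \<and> last w = v} \<le> (d - 1) ^ (r - 1)"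
proof (induction r rule: nat_induct_at_least)
  case base
  show ?case
  proof (intro allI impI)
    fix u v
    have "{w. nr_walk \<Gamma> 1 w \<and> hd w = u \<and> last w = v} \<subseteq> {[u,v]}"
    proof
      fix w assume "w \<in> {w. nr_walk \<Gamma> 1 w \<and> hd w = u \<and> last w = v}"
      then have "length w = 2" "hd w = u" "last w = v" unfolding nr_walk_def by auto
      then show "w \<in> {[u,v]}"
        by (cases w; cases "tl w"; auto)
    qed
    then have "card {w. nr_walk \<Gamma> 1 w \<and> hd w = u \<and> last w = v} \<le> card {[u,v]}"
      by (rule card_mono[rotated]) simp
    then show "card {w. nr_walk \<Gamma> 1 w \<and> hd w = u \<and> last w = v} \<le> (d - 1) ^ (1 - 1)" by simp
  qed
next
  case (Suc m)
  show ?case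
  proof (intro allI impI)
    fix u v assume gir: "enat (2 * Suc m) < girth1 K \<Gamma>"
    have "enat (2 * m) \<le> enat (2 * Suc m)" by simp
    then have girm: "enat (2 * m) < girth1 K \<Gamma>" using gir by (rule order_le_less_trans)
    have "enat 3 \<le> enat (2 * Suc m)" using Suc.hyps by simp
    then have g3: "enat 3 < girth1 K \<Gamma>" using gir by (rule order_le_less_trans)
    define A where "A = {w. nr_walk \<Gamma> (Suc m) w \<and> hd w = u \<and> last w = v}"
    define T where "T = (\<lambda>w. w ! m) ` A"
    define B where "B x = {w. nr_walk \<Gamma> m w \<and> hd w = u \<and> last w = x}" for x
    show "card {w. nr_walk \<Gamma> (Suc m) w \<and> hd w = u \<and> last w = v} \<le> (d - 1) ^ (Suc m - 1)"
    proof (cases "A = {}")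
      case True then have "{w. nr_walk \<Gamma> (Suc m) w \<and> hd w = u \<and> last w = v} = {}" unfolding A_def .
      then show ?thesis by (metis card.empty zero_le)
    next
      case False
      then have Ane: "A \<noteq> {}" .
    have Aprops: "length w = m + 2 \<and> w ! 0 = u \<and> w ! (m+1) = v \<and> nrw \<Gamma> (Suc m) (\<lambda>j. w ! j)" if "w \<in> A" for w
    proof -
      have L: "length w = m + 2" "nrw \<Gamma> (Suc m) (\<lambda>j. w ! j)" using that unfolding A_def nr_walk_nrw by auto
      then have "w \<noteq> []" by auto
      then have "hd w = w ! 0" "last w = w ! (m+1)" using L by (auto simp: hd_conv_nth last_conv_nth)
      then show ?thesis using L that unfolding A_def by auto
    qed
    have finA: "finite A" unfolding A_def by (rule walks_finite[OF sc]) simp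
    have finT: "finite T" unfolding T_def using finA by simp
    have finB: "finite (B x)" for x unfolding B_def by (rule walks_finite[OF sc]) (use Suc.hyps in simp)
    have sub: "butlast ` A \<subseteq> (\<Union>x\<in>T. B x)"
    proof
      fix w' assume "w' \<in> butlast ` A"
      then obtain w where w: "w \<in> A" "w' = butlast w" by auto
      note P = Aprops[OF w(1)]
      have Lb: "length (butlast w) = m + 1" using P by simp
      have nb: "butlast w ! j = w ! j" if "j \<le> m" for j using that Lb by (simp add: nth_butlast)
      have "nrw \<Gamma> m (\<lambda>j. w ! j)" using nrw_prefix[of \<Gamma> "Suc m"] P by auto
      then have nrb: "nrw \<Gamma> m (\<lambda>j. butlast w ! j)" using nrw_cong[of m "\<lambda>j. butlast w ! j" "\<lambda>j. w ! j"] nb by auto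
      have bne: "butlast w \<noteq> []" using Lb by (metis list.size(3) add_is_0 one_neq_zero)
      moreover have "hd (butlast w) = u" using nb[of 0] P hd_conv_nth[OF bne] by simp
      moreover have "last (butlast w) = w ! m" using Lb nb[of m] last_conv_nth[OF bne] by simp
      ultimately have "butlast w \<in> B (w ! m)" using Lb nrb unfolding B_def nr_walk_nrw using Lb by auto
      moreover have "w ! m \<in> T" unfolding T_def using w by auto
      ultimately show "w' \<in> (\<Union>x\<in>T. B x)" using w by auto
    qed
    have inj: "inj_on butlast A"
    proof (rule inj_onI)
      fix x y assume xy: "x \<in> A" "y \<in> A" "butlast x = butlast y"
      have "x \<noteq> []" "y \<noteq> []" "last x = last y" using xy(1,2) Aprops[OF xy(1)] Aprops[OF xy(2)] unfolding A_def by auto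
      then show "x = y" using xy(3) by (metis append_butlast_last_id)
    qed
    have IH: "card (B x) \<le> (d - 1) ^ (m - 1)" for x using Suc.IH girm unfolding B_def by blast
    have "card A = card (butlast ` A)" using card_image[OF inj] by simp
    also have "\<dots> \<le> card (\<Union>x\<in>T. B x)" by (rule card_mono[OF _ sub]) (use finT finB in auto)
    also have "\<dots> \<le> (\<Sum>x\<in>T. card (B x))" by (rule card_UN_le[OF finT])
    also have "\<dots> \<le> (\<Sum>x\<in>T. (d - 1) ^ (m - 1))" by (rule sum_mono) (rule IH)
    also have "\<dots> = card T * (d - 1) ^ (m - 1)" by simp
    finally have cA: "card A \<le> card T * (d - 1) ^ (m - 1)" .
    \<comment> \<open>the penultimate vertices together with v form a face\<close>
    have vT: "v \<notin> T"
    proof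
      assume "v \<in> T"
      then obtain w where w: "w \<in> A" "w ! m = v" unfolding T_def by auto
      have "is_edge \<Gamma> (w ! m) (w ! (m+1))" using nrwE(1)[OF conjunct2[OF conjunct2[OF conjunct2[OF Aprops[OF w(1)]]]], of m] by simp
      then show False using w Aprops[OF w(1)] unfolding is_edge_def by auto
    qed
    have Tedge: "insert x {v} \<in> \<Gamma>" if xT: "x \<in> T" for x
    proof -
      from xT obtain w where w: "w \<in> A" "w ! m = x" unfolding T_def by auto
      have "is_edge \<Gamma> (w ! m) (w ! (m+1))" using nrwE(1)[OF conjunct2[OF conjunct2[OF conjunct2[OF Aprops[OF w(1)]]]], of m] by simp
      then show ?thesis using w Aprops[OF w(1)] unfolding is_edge_def by auto
    qed
    have Tpair: "insert x (insert y {v}) \<in> \<Gamma>" if xyT: "x \<in> T" "y \<in> T" "x \<noteq> y" for x y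
    proof -
      from xyT(1) obtain w1 where w1: "w1 \<in> A" "w1 ! m = x" unfolding T_def by auto
      from xyT(2) obtain w2 where w2: "w2 \<in> A" "w2 ! m = y" unfolding T_def by auto
      note P1 = Aprops[OF w1(1)] and P2 = Aprops[OF w2(1)]
      have "{w1 ! (Suc m - 1), w1 ! Suc m, w2 ! (Suc m - 1)} \<in> \<Gamma>"
      proof (rule pair_face[OF sc, where K = K])
        show "nrw \<Gamma> (Suc m) (\<lambda>j. w1 ! j)" "nrw \<Gamma> (Suc m) (\<lambda>j. w2 ! j)" using P1 P2 by auto
        show "w1 ! 0 = w2 ! 0" "w1 ! Suc m = w2 ! Suc m" using P1 P2 by auto
        show "w1 ! (Suc m - 1) \<noteq> w2 ! (Suc m - 1)" using w1 w2 xyT by simp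
        show "enat (2 * Suc m) < girth1 K \<Gamma>" by fact
      qed simp
      then show ?thesis using w1 w2 P1 by (simp add: insert_commute)
    qed
    have face: "T \<union> {v} \<in> \<Gamma>"
    proof (rule flag[OF sc g3 finT])
      show "{v} \<in> \<Gamma>"
      proof -
        obtain x where "x \<in> T" using Ane unfolding T_def by auto
        then show ?thesis using sc_closed[OF sc Tedge[of x]] by auto
      qed
      show "T \<inter> {v} = {}" using vT by auto
      show "\<forall>x\<in>T. insert x {v} \<in> \<Gamma>" using Tedge by auto
      show "\<forall>x\<in>T. \<forall>y\<in>T. x \<noteq> y \<longrightarrow> insert x (insert y {v}) \<in> \<Gamma>" using Tpair by auto
    qed
    have "card (insert v T) \<le> d"
    proof -
      have "finite (card ` \<Gamma>)" using sc unfolding simplicial_complex_def by auto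
      moreover have "card (insert v T) \<in> card ` \<Gamma>" using face by auto
      ultimately show ?thesis using dM Max_ge by metis
    qed
    then have cT: "card T \<le> d - 1" using vT finT by simp
    have "card A \<le> (d - 1) * (d - 1) ^ (m - 1)" using cA cT by (meson le_trans mult_le_mono1)
    also have "\<dots> = (d - 1) ^ (Suc m - 1)" using Suc.hyps by (cases m) auto
    finally show ?thesis unfolding A_def .
    qed
  qed
qed



theorem mainTheorem7:
  fixes \<Gamma> :: "'a::linorder set set" and K :: "'k::field itself" and d r :: nat
  assumes "simplicial_complex \<Gamma>" and "sc_dim \<Gamma> = int d - 1" and "r \<ge> 1"
  shows "(girth1 K \<Gamma> > enat (2*r) \<longrightarrow>
            (\<forall>u\<in>vertices \<Gamma>. \<forall>v\<in>vertices \<Gamma>.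
               card {w. nr_walk \<Gamma> r w \<and> hd w = u \<and> last w = v} \<le> (d - 1) ^ (r - 1)))
       \<and> (girth1 K \<Gamma> > enat (2*r+1) \<longrightarrow>
            (\<forall>u v p q. is_edge \<Gamma> u v \<longrightarrow>
               nr_walk \<Gamma> (r+1) p \<longrightarrow> p ! 0 = u \<longrightarrow> p ! 1 = v \<longrightarrow>
               nr_walk \<Gamma> (r+1) q \<longrightarrow> q ! 0 = v \<longrightarrow> q ! 1 = u \<longrightarrow>
               last p \<noteq> last q))"
proof (rule conjI; intro impI allI ballI)
  have dM: "Max (card ` \<Gamma>) = d" using assms(2) unfolding sc_dim_def by simp
  fix u v assume g: "enat (2*r) < girth1 K \<Gamma>"
  show "card {w. nr_walk \<Gamma> r w \<and> hd w = u \<and> last w = v} \<le> (d - 1) ^ (r - 1)"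
    using count[OF assms(1) dM assms(3), where K = K] g by blast
next
  fix u v p q
  assume g: "enat (2*r+1) < girth1 K \<Gamma>" and uv: "is_edge \<Gamma> u v"
    and p: "nr_walk \<Gamma> (r+1) p" "p ! 0 = u" "p ! 1 = v"
    and q: "nr_walk \<Gamma> (r+1) q" "q ! 0 = v" "q ! 1 = u"
  show "last p \<noteq> last q"
  proof
    assume eq: "last p = last q"
    have Lp: "length p = r + 2" and Np: "nrw \<Gamma> (r+1) (\<lambda>j. p ! j)" using p unfolding nr_walk_nrw by auto
    have Lq: "length q = r + 2" and Nq: "nrw \<Gamma> (r+1) (\<lambda>j. q ! j)" using q unfolding nr_walk_nrw by auto
    have lp: "last p = p ! (r+1)" using Lp by (subst last_conv_nth) auto
    have lq: "last q = q ! (r+1)" using Lq by (subst last_conv_nth) auto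
    have f: "nrw \<Gamma> (r+1) (\<lambda>j. p ! (r + 1 - j))" using nrw_rev[OF Np] .
    have k: "nrw \<Gamma> r (\<lambda>j. q ! (j + 1))" using nrw_shift[OF Nq, of 1] by simp
    have q2: "q ! 0 \<noteq> q ! 2" "{q ! 0, q ! 1, q ! 2} \<notin> \<Gamma>" using nrwE(2,3)[OF Nq, of 0] assms(3) by (auto simp: numeral_2_eq_2)
    have G: "nrw \<Gamma> (r + 1 + r) (\<lambda>j. if j \<le> r + 1 then p ! (r + 1 - j) else q ! (j - (r + 1) + 1))"
    proof (rule nrw_glue[OF f k])
      show "p ! (r + 1 - (r + 1)) = q ! (0 + 1)" using p q by simp
      show "p ! (r + 1 - (r + 1 - 1)) \<noteq> q ! (1 + 1) \<and>
            {p ! (r + 1 - (r + 1 - 1)), p ! (r + 1 - (r + 1)), q ! (1 + 1)} \<notin> \<Gamma>"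
        using q2 p q by (simp add: insert_commute numeral_2_eq_2)
    qed
    show False
    proof (rule noclosed[OF assms(1) G])
      show "1 \<le> r + 1 + r" by simp
      show "enat (r + 1 + r) < girth1 K \<Gamma>" using g by (simp add: mult_2 add.commute add.left_commute)
      show "(if r + 1 + r \<le> r + 1 then p ! (r + 1 - (r + 1 + r)) else q ! (r + 1 + r - (r + 1) + 1)) =
            (if 0 \<le> r + 1 then p ! (r + 1 - 0) else q ! (0 - (r + 1) + 1))"
        using assms(3) eq lp lq by simp
    qed
  qed
qed


end
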